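(* Let $r$ and $t$ be positive integers with $r\ge 3$ and $2\le t\le \frac{r+3}{3}$, and let $n=3r-t$. If $\rho_2(K(n,r))\ge 4$, then there exists a $2$-packing $S$ of $K(n,r)$ with $|S|=4$ such that $i_x(S)\le 2$ for every $x\in[n]$.
   Context: For integers $n\ge 2r$, the Kneser graph $K(n,r)$ has as vertices the $r$-element subsets of $[n]=\{1,\dots,n\}$, two vertices being adjacent iff they are disjoint. A $2$-packing of a graph $G$ is a set of vertices pairwise at distance at least $3$ in $G$; $\rho_2(G)$ is the maximum cardinality of a $2$-packing. For a set $S$ of vertices of $K(n,r)$ and $x\in[n]$, $i_x(S)=|\{u\in S: x\in u\}|$ is the number of vertices of $S$ containing $x$. *)

theory Defs
  imports Main
begin

definition kneser_vertices :: "nat \<Rightarrow> nat \<Rightarrow> nat set set" where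
  "kneser_vertices n r = {u. u \<subseteq> {1..n} \<and> card u = r}"

text \<open>Adjacency: two vertices are adjacent iff disjoint (vertices are nonempty when r >= 1,
  so this is irreflexive).\<close>
definition kneser_adj :: "nat \<Rightarrow> nat \<Rightarrow> nat set \<Rightarrow> nat set \<Rightarrow> bool" where
  "kneser_adj n r u v \<longleftrightarrow> u \<in> kneser_vertices n r \<and> v \<in> kneser_vertices n r \<and> u \<inter> v = {}"

definition kneser_walk :: "nat \<Rightarrow> nat \<Rightarrow> nat set \<Rightarrow> nat set \<Rightarrow> nat \<Rightarrow> bool" where
  "kneser_walk n r u v k \<longleftrightarrow>
     (\<exists>p :: nat \<Rightarrow> nat set. p 0 = u \<and> p k = v \<and> (\<forall>i\<le>k. p i \<in> kneser_vertices n r)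
        \<and> (\<forall>i<k. kneser_adj n r (p i) (p (Suc i))))"

definition kneser_dist_ge :: "nat \<Rightarrow> nat \<Rightarrow> nat set \<Rightarrow> nat set \<Rightarrow> nat \<Rightarrow> bool" where
  "kneser_dist_ge n r u v d \<longleftrightarrow> (\<forall>k<d. \<not> kneser_walk n r u v k)"

definition two_packing :: "nat \<Rightarrow> nat \<Rightarrow> nat set set \<Rightarrow> bool" where
  "two_packing n r S \<longleftrightarrow> S \<subseteq> kneser_vertices n r \<and>
     (\<forall>u\<in>S. \<forall>v\<in>S. u \<noteq> v \<longrightarrow> kneser_dist_ge n r u v 3)"

text \<open>rho_2(K(n,r)): maximum cardinality of a 2-packing (the vertex set is finite).\<close>
definition rho2 :: "nat \<Rightarrow> nat \<Rightarrow> nat" where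
  "rho2 n r = Max (card ` {S. two_packing n r S})"

definition i_x :: "nat set set \<Rightarrow> nat \<Rightarrow> nat" where
  "i_x S x = card {u\<in>S. x \<in> u}"

end

theory Submission
  imports Defs
begin

lemma walk2:
  assumes "u \<in> kneser_vertices n r" "v \<in> kneser_vertices n r" "w \<in> kneser_vertices n r"
    "u \<inter> w = {}" "w \<inter> v = {}"
  shows "kneser_walk n r u v 2"
proof -
  define p where "p = (\<lambda>i::nat. if i = 0 then u else if i = 1 then w else v)"
  have a: "\<And>i. i \<le> 2 \<Longrightarrow> i = 0 \<or> i = 1 \<or> i = (2::nat)" by auto
  have b: "\<And>i. i < 2 \<Longrightarrow> i = 0 \<or> i = (1::nat)" by auto
  show ?thesis unfolding kneser_walk_def
    apply (rule exI[of _ p])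
    using assms a b by (auto simp: p_def kneser_adj_def)
qed

lemma dist_imp:
  assumes "u \<in> kneser_vertices n r" "v \<in> kneser_vertices n r" "kneser_dist_ge n r u v 3"
    "n + t = 3*r"
  shows "card (u \<inter> v) < t"
proof (rule ccontr)
  assume "\<not> ?thesis" hence ge: "t \<le> card (u \<inter> v)" by simp
  have su: "u \<subseteq> {1..n}" "card u = r" using assms(1) by (auto simp: kneser_vertices_def)
  have sv: "v \<subseteq> {1..n}" "card v = r" using assms(2) by (auto simp: kneser_vertices_def)
  have fu: "finite u" "finite v" using su sv finite_subset by auto
  have cu: "card (u \<union> v) + card (u \<inter> v) = 2*r" using card_Un_Int[of u v] fu su sv by simp
  have sub: "u \<union> v \<subseteq> {1..n}" using su sv by auto
  have cC: "card ({1..n} - (u \<union> v)) = n - card (u \<union> v)"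
    using card_Diff_subset[OF _ sub] fu by simp
  have cle: "card (u \<union> v) \<le> n" using card_mono[OF _ sub] by simp
  have "r \<le> card ({1..n} - (u \<union> v))" using cC cu ge assms(4) cle by arith
  then obtain w where w: "w \<subseteq> {1..n} - (u \<union> v)" "card w = r"
    by (meson obtain_subset_with_card_n)
  have "w \<in> kneser_vertices n r" using w by (auto simp: kneser_vertices_def)
  moreover have "u \<inter> w = {}" "w \<inter> v = {}" using w by auto
  ultimately have "kneser_walk n r u v 2" using walk2 assms by blast
  then show False using assms(3) unfolding kneser_dist_ge_def by auto
qed

lemma dist_conv:
  assumes "u \<in> kneser_vertices n r" "v \<in> kneser_vertices n r" "u \<noteq> v"
    "u \<inter> v \<noteq> {}" "card (u \<inter> v) < t" "n + t = 3*r"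
  shows "kneser_dist_ge n r u v 3"
  unfolding kneser_dist_ge_def
proof (intro allI impI notI)
  fix k :: nat assume k: "k < 3" and wk: "kneser_walk n r u v k"
  then obtain p where p: "p 0 = u" "p k = v" "\<forall>i\<le>k. p i \<in> kneser_vertices n r"
        "\<forall>i<k. kneser_adj n r (p i) (p (Suc i))" unfolding kneser_walk_def by blast
  have "k = 0 \<or> k = 1 \<or> k = 2" using k by auto
  moreover have "k \<noteq> 0" using p assms(3) by auto
  moreover have "k \<noteq> 1"
  proof
    assume k1: "k = 1"
    have "kneser_adj n r (p 0) (p (Suc 0))" using p(4) k1 by simp
    hence "kneser_adj n r u v" using p(1,2) k1 by simp
    thus False using assms(4) by (simp add: kneser_adj_def)
  qed
  moreover have "k \<noteq> 2"
  proof
    assume k2: "k = 2"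
    have a1': "kneser_adj n r (p 0) (p (Suc 0))" using p(4) k2 by simp
    have a1: "kneser_adj n r u (p 1)" using a1' p(1) by simp
    have pv: "p (Suc (Suc 0)) = v" using p(2) k2 by (simp add: numeral_2_eq_2)
    have a2': "kneser_adj n r (p (Suc 0)) (p (Suc (Suc 0)))" using p(4) k2 by simp
    have a2: "kneser_adj n r (p 1) v" using a2' pv by simp
    define w where "w = p 1"
    have w: "w \<subseteq> {1..n}" "card w = r" "w \<inter> u = {}" "w \<inter> v = {}"
      using a1 a2 by (auto simp: w_def kneser_adj_def kneser_vertices_def)
    have su: "u \<subseteq> {1..n}" "card u = r" using assms(1) by (auto simp: kneser_vertices_def)
    have sv: "v \<subseteq> {1..n}" "card v = r" using assms(2) by (auto simp: kneser_vertices_def)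
    have fu: "finite u" "finite v" using su sv finite_subset by auto
    have cu: "card (u \<union> v) + card (u \<inter> v) = 2*r" using card_Un_Int[of u v] fu su sv by simp
    have sub: "u \<union> v \<subseteq> {1..n}" using su sv by auto
    have cC: "card ({1..n} - (u \<union> v)) = n - card (u \<union> v)"
      using card_Diff_subset[OF _ sub] fu by simp
    have "w \<subseteq> {1..n} - (u \<union> v)" using w by auto
    hence "card w \<le> card ({1..n} - (u \<union> v))" by (intro card_mono) auto
    hence "r \<le> card ({1..n} - (u \<union> v))" using w by simp
    then show False using cC cu assms(5,6) by arith
  qed
  ultimately show False by blast
qed

lemma bonf4:
  assumes "finite A" "finite B" "finite C" "finite D"
  shows "card A + card B + card C + card D \<le> card (A \<union> B \<union> C \<union> D)
     + card (A\<inter>B) + card (A\<inter>C) + card (A\<inter>D) + card (B\<inter>C) + card (B\<inter>D) + card (C\<inter>D)"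
proof -
  have 1: "card A + card B = card (A \<union> B) + card (A \<inter> B)" using card_Un_Int assms by blast
  have 2: "card (A \<union> B) + card C = card (A \<union> B \<union> C) + card ((A \<union> B) \<inter> C)"
    using card_Un_Int assms by (meson finite_UnI)
  have 3: "card (A \<union> B \<union> C) + card D = card (A \<union> B \<union> C \<union> D) + card ((A \<union> B \<union> C) \<inter> D)"
    using card_Un_Int assms by (meson finite_UnI)
  have 4: "card ((A \<union> B) \<inter> C) \<le> card (A \<inter> C) + card (B \<inter> C)"
    by (metis Int_Un_distrib2 card_Un_le)
  have 5: "card ((A \<union> B \<union> C) \<inter> D) \<le> card (A \<inter> D) + card (B \<inter> D) + card (C \<inter> D)"
    by (metis Int_Un_distrib2 card_Un_le add_right_mono order_trans)
  show ?thesis using 1 2 3 4 5 by linarith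
qed

lemma card_filter4:
  assumes "\<not> (x \<in> a \<and> x \<in> b \<and> x \<in> c)" "\<not> (x \<in> a \<and> x \<in> b \<and> x \<in> d)"
    "\<not> (x \<in> a \<and> x \<in> c \<and> x \<in> d)" "\<not> (x \<in> b \<and> x \<in> c \<and> x \<in> d)"
  shows "card {u \<in> {a,b,c,d}. x \<in> u} \<le> 2"
proof -
  define F where "F = (\<lambda>y::'a set. if x \<in> y then {y} else {})"
  have e: "{u \<in> {a,b,c,d}. x \<in> u} = F a \<union> (F b \<union> (F c \<union> F d))" by (auto simp: F_def)
  have c: "\<And>y. card (F y) = (if x \<in> y then 1 else 0)" by (simp add: F_def)
  have "card (F a \<union> (F b \<union> (F c \<union> F d))) \<le> card (F a) + card (F b \<union> (F c \<union> F d))" by (rule card_Un_le)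
  also have "\<dots> \<le> card (F a) + (card (F b) + card (F c \<union> F d))" using card_Un_le add_left_mono by blast
  also have "\<dots> \<le> card (F a) + (card (F b) + (card (F c) + card (F d)))" using card_Un_le add_left_mono by blast
  also have "\<dots> \<le> 2" unfolding c using assms by (cases "x \<in> a"; cases "x \<in> b"; cases "x \<in> c"; cases "x \<in> d") auto
  finally show ?thesis using e by simp
qed


lemma card4_disj:
  assumes "finite A" "finite B" "finite C" "finite D"
    "A \<inter> B = {}" "A \<inter> C = {}" "A \<inter> D = {}" "B \<inter> C = {}" "B \<inter> D = {}" "C \<inter> D = {}"
  shows "card (A \<union> (B \<union> (C \<union> D))) = card A + card B + card C + card D"
proof -
  have "card (C \<union> D) = card C + card D" using assms by (simp add: card_Un_disjoint)
  moreover have "card (B \<union> (C \<union> D)) = card B + card (C \<union> D)" using assms by (intro card_Un_disjoint) auto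
  moreover have "card (A \<union> (B \<union> (C \<union> D))) = card A + card (B \<union> (C \<union> D))" using assms by (intro card_Un_disjoint) auto
  ultimately show ?thesis by simp
qed

lemma construction:
  fixes r t n :: nat
  assumes "2 \<le> t" "3 * t \<le> r + 3" "n + t = 3 * r" "r + 6 \<le> 5 * t"
  shows "\<exists>S. two_packing n r S \<and> card S = 4 \<and> (\<forall>x\<in>{1..n}. i_x S x \<le> 2)"
proof -
  define m where "m = t - 1"
  define q where "q = r - 3 * m"
  have m1: "1 \<le> m" and rq: "r = 3 * m + q" and nq: "6 * m + 4 * q \<le> n"
    using assms by (auto simp: m_def q_def)
  define A where "A = (\<lambda>k::nat. {1 + k * m ..< 1 + k * m + m})"
  define P where "P = (\<lambda>k::nat. {1 + 6 * m + k * q ..< 1 + 6 * m + k * q + q})"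
  define u1 where "u1 = A 0 \<union> (A 1 \<union> (A 2 \<union> P 0))"
  define u2 where "u2 = A 0 \<union> (A 3 \<union> (A 4 \<union> P 1))"
  define u3 where "u3 = A 1 \<union> (A 3 \<union> (A 5 \<union> P 2))"
  define u4 where "u4 = A 2 \<union> (A 4 \<union> (A 5 \<union> P 3))"
  have cA: "\<And>k. card (A k) = m" and cP: "\<And>k. card (P k) = q" by (simp_all add: A_def P_def)
  have fA: "\<And>k. finite (A k)" and fP: "\<And>k. finite (P k)" by (simp_all add: A_def P_def)
  have c1: "card u1 = r" unfolding u1_def using rq
    by (subst card4_disj) (auto simp: fA fP cA cP, auto simp: A_def P_def)
  have c2: "card u2 = r" unfolding u2_def using rq
    by (subst card4_disj) (auto simp: fA fP cA cP, auto simp: A_def P_def)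
  have c3: "card u3 = r" unfolding u3_def using rq
    by (subst card4_disj) (auto simp: fA fP cA cP, auto simp: A_def P_def)
  have c4: "card u4 = r" unfolding u4_def using rq
    by (subst card4_disj) (auto simp: fA fP cA cP, auto simp: A_def P_def)
  have s1: "u1 \<subseteq> {1..n}" "u2 \<subseteq> {1..n}" "u3 \<subseteq> {1..n}" "u4 \<subseteq> {1..n}"
    using nq m1 by (auto simp: u1_def u2_def u3_def u4_def A_def P_def)
  have i12: "u1 \<inter> u2 = A 0" using m1 by (auto simp: u1_def u2_def A_def P_def)
  have i13: "u1 \<inter> u3 = A 1" using m1 by (auto simp: u1_def u3_def A_def P_def)
  have i14: "u1 \<inter> u4 = A 2" using m1 by (auto simp: u1_def u4_def A_def P_def)
  have i23: "u2 \<inter> u3 = A 3" using m1 by (auto simp: u2_def u3_def A_def P_def)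
  have i24: "u2 \<inter> u4 = A 4" using m1 by (auto simp: u2_def u4_def A_def P_def)
  have i34: "u3 \<inter> u4 = A 5" using m1 by (auto simp: u3_def u4_def A_def P_def)
  have cm: "m < t" "0 < m" using m1 by (auto simp: m_def)
  have ne: "\<And>k. A k \<noteq> {}" using m1 by (auto simp: A_def)
  have v: "u1 \<in> kneser_vertices n r" "u2 \<in> kneser_vertices n r"
    "u3 \<in> kneser_vertices n r" "u4 \<in> kneser_vertices n r"
    using s1 c1 c2 c3 c4 by (auto simp: kneser_vertices_def)
  have lt: "m < r" using rq m1 by simp
  have d: "u1 \<noteq> u2" "u1 \<noteq> u3" "u1 \<noteq> u4" "u2 \<noteq> u3" "u2 \<noteq> u4" "u3 \<noteq> u4"
    using i12 i13 i14 i23 i24 i34 c1 c2 c3 c4 cA lt by (metis Int_absorb less_irrefl)+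
  define S where "S = {u1, u2, u3, u4}"
  have pair: "\<And>a b k. a \<in> kneser_vertices n r \<Longrightarrow> b \<in> kneser_vertices n r \<Longrightarrow> a \<noteq> b \<Longrightarrow> a \<inter> b = A k \<Longrightarrow>
     kneser_dist_ge n r a b 3 \<and> kneser_dist_ge n r b a 3"
  proof -
    fix a b k assume h: "a \<in> kneser_vertices n r" "b \<in> kneser_vertices n r" "a \<noteq> b" "a \<inter> b = A k"
    have "b \<inter> a = A k" using h(4) by blast
    then show "kneser_dist_ge n r a b 3 \<and> kneser_dist_ge n r b a 3"
      using h dist_conv[of a n r b t] dist_conv[of b n r a t] ne cA cm assms(3) by metis
  qed
  have tp: "two_packing n r S"
    unfolding two_packing_def S_def
    using v d pair[OF v(1) v(2) d(1) i12] pair[OF v(1) v(3) d(2) i13] pair[OF v(1) v(4) d(3) i14]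
      pair[OF v(2) v(3) d(4) i23] pair[OF v(2) v(4) d(5) i24] pair[OF v(3) v(4) d(6) i34]
    by auto
  have cS: "card S = 4" using d by (simp add: S_def)
  have t1: "u1 \<inter> u2 \<inter> u3 = {}" "u1 \<inter> u2 \<inter> u4 = {}" "u1 \<inter> u3 \<inter> u4 = {}" "u2 \<inter> u3 \<inter> u4 = {}"
    unfolding i12 i13 i23 using m1 by (auto simp: u3_def u4_def A_def P_def)
  have "\<forall>x\<in>{1..n}. i_x S x \<le> 2"
  proof
    fix x
    show "i_x S x \<le> 2" unfolding i_x_def S_def
      by (rule card_filter4) (use t1 in blast)+
  qed
  then show ?thesis using tp cS by blast
qed


theorem lemma4p6:
  fixes r t n :: nat
  assumes "r \<ge> 3" and "2 \<le> t" and "3 * t \<le> r + 3" and "n = 3 * r - t"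
    and "rho2 n r \<ge> 4"
  shows "\<exists>S. two_packing n r S \<and> card S = 4 \<and> (\<forall>x\<in>{1..n}. i_x S x \<le> 2)"
proof -
  have tr: "t \<le> r" using assms by linarith
  have nt: "n + t = 3 * r" using assms tr by simp
  have fv: "finite (kneser_vertices n r)"
    by (rule finite_subset[of _ "Pow {1..n}"]) (auto simp: kneser_vertices_def)
  have fin: "finite {S. two_packing n r S}"
    by (rule finite_subset[of _ "Pow (kneser_vertices n r)"]) (auto simp: two_packing_def fv)
  have nem: "{S. two_packing n r S} \<noteq> {}"
    using empty_iff by (metis (no_types, lifting) empty_subsetI mem_Collect_eq two_packing_def)
  have "rho2 n r \<in> card ` {S. two_packing n r S}"
    unfolding rho2_def using fin nem by (intro Max_in) auto
  then obtain S0 where S0: "two_packing n r S0" "card S0 = rho2 n r" by auto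
  then obtain T where T: "T \<subseteq> S0" "card T = 4"
    using assms(5) by (metis obtain_subset_with_card_n)
  then obtain a b c d where abcd: "T = {a, b, c, d}" "a \<noteq> b" "a \<noteq> c" "a \<noteq> d" "b \<noteq> c" "b \<noteq> d" "c \<noteq> d"
    by (auto simp: card_Suc_eq numeral_eq_Suc)
  have V: "a \<in> kneser_vertices n r" "b \<in> kneser_vertices n r" "c \<in> kneser_vertices n r" "d \<in> kneser_vertices n r"
    using S0(1) T(1) abcd(1) by (auto simp: two_packing_def)
  have D: "\<And>x y. x \<in> T \<Longrightarrow> y \<in> T \<Longrightarrow> x \<noteq> y \<Longrightarrow> kneser_dist_ge n r x y 3"
    using S0(1) T(1) unfolding two_packing_def by blast
  have P: "\<And>x y. x \<in> T \<Longrightarrow> y \<in> T \<Longrightarrow> x \<noteq> y \<Longrightarrow> card (x \<inter> y) \<le> t - 1"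
  proof -
    fix x y assume h: "x \<in> T" "y \<in> T" "x \<noteq> y"
    have "x \<in> kneser_vertices n r" "y \<in> kneser_vertices n r" using h V abcd(1) by auto
    then have "card (x \<inter> y) < t" using dist_imp D[OF h] nt by blast
    then show "card (x \<inter> y) \<le> t - 1" by simp
  qed
  have cards: "card a = r" "card b = r" "card c = r" "card d = r" "finite a" "finite b" "finite c" "finite d"
    "a \<subseteq> {1..n}" "b \<subseteq> {1..n}" "c \<subseteq> {1..n}" "d \<subseteq> {1..n}"
    using V by (auto simp: kneser_vertices_def intro: finite_subset)
  have "card (a \<union> b \<union> c \<union> d) \<le> n"
    using card_mono[of "{1..n}" "a \<union> b \<union> c \<union> d"] cards by simp
  moreover have "card a + card b + card c + card d \<le> card (a \<union> b \<union> c \<union> d)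
     + card (a\<inter>b) + card (a\<inter>c) + card (a\<inter>d) + card (b\<inter>c) + card (b\<inter>d) + card (c\<inter>d)"
    using bonf4 cards by blast
  moreover have "card (a\<inter>b) \<le> t - 1" "card (a\<inter>c) \<le> t - 1" "card (a\<inter>d) \<le> t - 1"
    "card (b\<inter>c) \<le> t - 1" "card (b\<inter>d) \<le> t - 1" "card (c\<inter>d) \<le> t - 1"
    using P abcd by auto
  ultimately have "r + 6 \<le> 5 * t" using cards(1-4) nt assms(2) by linarith
  then show ?thesis using construction[OF assms(2) assms(3) nt] by blast
qed

end
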